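(* Let $m\ge 1$ and $p,q\in\{1,\dots,2n-1\}$ satisfy $m+(p-n)_+\ge 1+(q-n)_+$, where $x_+=\max(x,0)$. Write $s_1<s_2<\cdots<s_{2n}$ for the elements of $\mathcal{I}$ in increasing order (so $s_j=j$ for $j\le n$ and $s_j=\overline{2n-j+1}$ for $n<j\le 2n$). Suppose $M_1\in M_p(m)$ is one of the following monomials (empty products being $1$): (1) $M_1=X_{s_2}(p+m-1)X_{s_3}(p+m-2)\cdots X_{s_p}(m+1)\,X_{\bar 1}(m)$; (2) $M_1=X_{s_2}(p+m-1)X_{s_3}(p+m-2)\cdots X_{s_{p+1}}(m)$; (3) $M_1=X_{s_1}(p+m-1)X_{s_2}(p+m-2)\cdots X_{s_{p-1}}(m+1)\,X_{\bar 1}(m)$. Then for every $M_2\in M_q(1)$, the monomial $M_1\cdot M_2$ is not a highest weight vector of $\mathcal{M}$.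
   Context: Fix $n\ge 2$ and type $C_n$ with $I=\{1,\dots,n\}$. Let $\mathcal{M}$ be the set of Laurent monomials $M=\prod_{i\in I,k\in\mathbb{Z}}Y_i(k)^{y_i(k)}$ ($y_i(k)\in\mathbb{Z}$, finitely many nonzero); put $Y_0(k)=Y_{n+1}(k)=1$. For $i\in I$ put $\varepsilon_i(M)=\max_k(-\sum_{j>k}y_i(j))$; $M$ is a highest weight vector if $\varepsilon_i(M)=0$ for all $i\in I$ (equivalently all Kashiwara operators $\tilde e_i$ of Nakajima's monomial crystal kill $M$). The $X$-variables are $X_i(k)=Y_i(k)Y_{i-1}(k+1)^{-1}$ and $X_{\bar i}(k)=Y_{i-1}(k+n-i+1)Y_i(k+n-i+1)^{-1}$ for $1\le i\le n$, $k\in\mathbb{Z}$. The alphabet $\mathcal{I}=\{1,\dots,n,\bar n,\dots,\bar 1\}$ is ordered $1<\cdots<n<\bar n<\cdots<\bar 1$. For $1\le k\le 2n$, $m\in\mathbb{Z}$: $M_k(m)=\{X_{i_1}(k+m-1)X_{i_2}(k+m-2)\cdots X_{i_k}(m): i_j\in\mathcal{I},\ i_1<\cdots<i_k\}$. *)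

theory Defs
  imports Main
begin

text \<open>Type C_n, I = {1..n}. A Laurent monomial M = prod Y_i(k)^{y_i(k)} is represented
by its exponent function y :: nat => int => int (y i k = exponent of Y_i(k)),
with finite support inside {1..n} x Z. Y_0(k) = Y_{n+1}(k) = 1 is built into Yv.\<close>

type_synonym monomial = "nat \<Rightarrow> int \<Rightarrow> int"

definition monomials :: "nat \<Rightarrow> monomial set" where
  "monomials n = {y. finite {(i,k). y i k \<noteq> 0} \<and> (\<forall>i k. y i k \<noteq> 0 \<longrightarrow> i \<in> {1..n})}"

definition mmult :: "monomial \<Rightarrow> monomial \<Rightarrow> monomial" where
  "mmult M N = (\<lambda>i k. M i k + N i k)"

definition monone :: monomial where
  "monone = (\<lambda>i k. 0)"

definition Yv :: "nat \<Rightarrow> nat \<Rightarrow> int \<Rightarrow> monomial" where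
  "Yv n i k = (\<lambda>j l. if j = i \<and> l = k \<and> 1 \<le> i \<and> i \<le> n then 1 else 0)"

definition minv :: "monomial \<Rightarrow> monomial" where
  "minv M = (\<lambda>i k. - M i k)"

definition tailsum :: "monomial \<Rightarrow> nat \<Rightarrow> int \<Rightarrow> int" where
  "tailsum M i k = (\<Sum>j\<in>{j. k < j \<and> M i j \<noteq> 0}. M i j)"

definition eps :: "monomial \<Rightarrow> nat \<Rightarrow> int" where
  "eps M i = Sup (range (\<lambda>k. - tailsum M i k))"

definition highest_weight :: "nat \<Rightarrow> monomial \<Rightarrow> bool" where
  "highest_weight n M \<longleftrightarrow> M \<in> monomials n \<and> (\<forall>i\<in>{1..n}. eps M i = 0)"

definition Xv :: "nat \<Rightarrow> nat \<Rightarrow> int \<Rightarrow> monomial" where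
  "Xv n i k = mmult (Yv n i k) (minv (Yv n (i - 1) (k + 1)))"

definition Xbar :: "nat \<Rightarrow> nat \<Rightarrow> int \<Rightarrow> monomial" where
  "Xbar n i k = mmult (Yv n (i - 1) (k + int n - int i + 1)) (minv (Yv n i (k + int n - int i + 1)))"

text \<open>Letters of the alphabet 1 < ... < n < nbar < ... < 1bar are encoded by their
  position j in {1..2n}: s_j = j for j <= n, s_j = bar(2n-j+1) for n < j <= 2n.\<close>
definition Xs :: "nat \<Rightarrow> nat \<Rightarrow> int \<Rightarrow> monomial" where
  "Xs n j k = (if j \<le> n then Xv n j k else Xbar n (2*n - j + 1) k)"

definition Xword :: "nat \<Rightarrow> int \<Rightarrow> nat list \<Rightarrow> monomial" where
  "Xword n m js = foldr mmult
     (map (\<lambda>t. Xs n (js ! t) (int (length js) + m - 1 - int t)) [0..<length js]) monone"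

definition Mset :: "nat \<Rightarrow> nat \<Rightarrow> int \<Rightarrow> monomial set" where
  "Mset n k m = {Xword n m js | js. length js = k \<and> sorted_wrt (<) js \<and> set js \<subseteq> {1..2*n}}"

end

theory Submission
  imports Defs
begin


definition fs :: "monomial \<Rightarrow> bool" where
  "fs M \<longleftrightarrow> (\<forall>i. finite {k. M i k \<noteq> 0})"

definition Bof :: "nat \<Rightarrow> monomial \<Rightarrow> int \<Rightarrow> int" where
  "Bof n M K = (\<Sum>i\<in>{1..n}. tailsum M i K)"

definition Aof :: "nat \<Rightarrow> monomial \<Rightarrow> int \<Rightarrow> int" where
  "Aof n M K = (\<Sum>i\<in>{1..n}. tailsum M i (K - int i))"

definition cB :: "nat \<Rightarrow> nat \<Rightarrow> int \<Rightarrow> int \<Rightarrow> int" where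
  "cB n j t K = (if j = 1 then (if t > K then 1 else 0)
     else if j \<le> n then (if t = K then -1 else 0)
     else if j = 2*n then (if t + int n > K then -1 else 0) else 0)"

definition cA :: "nat \<Rightarrow> nat \<Rightarrow> int \<Rightarrow> int \<Rightarrow> int" where
  "cA n j t K = (if j = 1 then (if t \<ge> K then 1 else 0)
     else if j \<le> n then 0
     else if j = 2*n then (if t + int n \<ge> K then -1 else 0)
     else (if t + int n = K then -1 else 0))"

lemma fs_Yv: "fs (Yv n a b)"
proof -
  have "\<And>i. {k. Yv n a b i k \<noteq> 0} \<subseteq> {b}" by (auto simp: Yv_def)
  then show ?thesis unfolding fs_def by (meson finite.emptyI finite_insert finite_subset)
qed

lemma fs_mmult: "fs M \<Longrightarrow> fs N \<Longrightarrow> fs (mmult M N)"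
proof -
  assume a: "fs M" "fs N"
  have "\<And>i. {k. mmult M N i k \<noteq> 0} \<subseteq> {k. M i k \<noteq> 0} \<union> {k. N i k \<noteq> 0}"
    by (auto simp: mmult_def)
  then show ?thesis using a unfolding fs_def by (meson finite_UnI finite_subset)
qed

lemma fs_minv: "fs M \<Longrightarrow> fs (minv M)"
  unfolding fs_def minv_def by simp

lemma fs_monone: "fs monone"
  unfolding fs_def monone_def by simp

lemma fs_Xs: "fs (Xs n j t)"
  unfolding Xs_def Xv_def Xbar_def by (simp add: fs_mmult fs_minv fs_Yv)

lemma fs_foldr: "(\<forall>x\<in>set xs. fs x) \<Longrightarrow> fs (foldr mmult xs monone)"
  by (induction xs) (auto simp: fs_monone fs_mmult)

lemma fs_Xword: "fs (Xword n m js)"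
  unfolding Xword_def by (rule fs_foldr) (auto simp: fs_Xs)

lemma ts_add:
  assumes "finite {k. M i k \<noteq> 0}" "finite {k. N i k \<noteq> 0}"
  shows "tailsum (mmult M N) i k = tailsum M i k + tailsum N i k"
proof -
  let ?S = "{j. k < j \<and> (M i j \<noteq> 0 \<or> N i j \<noteq> 0)}"
  have fin: "finite ?S"
    by (rule finite_subset[of _ "{k. M i k \<noteq> 0} \<union> {k. N i k \<noteq> 0}"]) (use assms in auto)
  have 1: "tailsum M i k = (\<Sum>j\<in>?S. M i j)"
    unfolding tailsum_def by (rule sum.mono_neutral_left) (use fin in auto)
  have 2: "tailsum N i k = (\<Sum>j\<in>?S. N i j)"
    unfolding tailsum_def by (rule sum.mono_neutral_left) (use fin in auto)
  have 3: "tailsum (mmult M N) i k = (\<Sum>j\<in>?S. mmult M N i j)"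
    unfolding tailsum_def by (rule sum.mono_neutral_left) (use fin in \<open>auto simp: mmult_def\<close>)
  show ?thesis unfolding 1 2 3 by (simp add: mmult_def sum.distrib)
qed

lemma ts_minv: "tailsum (minv M) i k = - tailsum M i k"
  unfolding tailsum_def minv_def by (simp add: sum_negf)

lemma ts_Yv: "tailsum (Yv n a b) i k = (if i = a \<and> 1 \<le> a \<and> a \<le> n \<and> k < b then 1 else 0)"
proof (cases "i = a \<and> 1 \<le> a \<and> a \<le> n \<and> k < b")
  case True
  then have "{j. k < j \<and> Yv n a b i j \<noteq> 0} = {b}" by (auto simp: Yv_def)
  then show ?thesis using True unfolding tailsum_def by (simp add: Yv_def)
next
  case False
  then have "{j. k < j \<and> Yv n a b i j \<noteq> 0} = {}" by (auto simp: Yv_def)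
  then show ?thesis using False unfolding tailsum_def by simp
qed

lemma ts_monone: "tailsum monone i k = 0"
  unfolding tailsum_def monone_def by simp

lemma Bof_add: "fs M \<Longrightarrow> fs N \<Longrightarrow> Bof n (mmult M N) K = Bof n M K + Bof n N K"
  unfolding Bof_def fs_def by (simp add: ts_add sum.distrib)

lemma Aof_add: "fs M \<Longrightarrow> fs N \<Longrightarrow> Aof n (mmult M N) K = Aof n M K + Aof n N K"
  unfolding Aof_def fs_def by (simp add: ts_add sum.distrib)

lemma Bof_foldr: "(\<forall>x\<in>set xs. fs x) \<Longrightarrow> Bof n (foldr mmult xs monone) K = sum_list (map (\<lambda>M. Bof n M K) xs)"
proof (induction xs)
  case Nil then show ?case by (simp add: Bof_def ts_monone)
next
  case (Cons a xs) then show ?case by (simp add: Bof_add fs_foldr)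
qed

lemma Aof_foldr: "(\<forall>x\<in>set xs. fs x) \<Longrightarrow> Aof n (foldr mmult xs monone) K = sum_list (map (\<lambda>M. Aof n M K) xs)"
proof (induction xs)
  case Nil then show ?case by (simp add: Aof_def ts_monone)
next
  case (Cons a xs) then show ?case by (simp add: Aof_add fs_foldr)
qed

lemma sum_ind: assumes "finite A" shows "(\<Sum>i\<in>A. (if i = a \<and> Q i then (c::int) else 0)) = (if a \<in> A \<and> Q a then c else 0)"
proof -
  have "(\<Sum>i\<in>A. (if i = a \<and> Q i then c else 0)) = (\<Sum>i\<in>A. (if a = i then (if Q a then c else 0) else 0))"
    by (rule sum.cong) auto
  also have "\<dots> = (if a \<in> A then (if Q a then c else 0) else 0)" using \<open>finite A\<close> by (simp add: sum.delta)
  finally show ?thesis by simp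
qed



lemma Bof_minv: "Bof n (minv M) K = - Bof n M K"
  unfolding Bof_def by (simp add: ts_minv sum_negf)
lemma Aof_minv: "Aof n (minv M) K = - Aof n M K"
  unfolding Aof_def by (simp add: ts_minv sum_negf)

lemma Bof_Yv: "Bof n (Yv n a b) K = (if 1 \<le> a \<and> a \<le> n \<and> K < b then 1 else 0)"
  unfolding Bof_def ts_Yv using sum_ind[of "{1..n}" a "\<lambda>i. 1 \<le> a \<and> a \<le> n \<and> K < b" 1]
  by simp

lemma Aof_Yv: "Aof n (Yv n a b) K = (if 1 \<le> a \<and> a \<le> n \<and> K - int a < b then 1 else 0)"
  unfolding Aof_def ts_Yv using sum_ind[of "{1..n}" a "\<lambda>i. 1 \<le> a \<and> a \<le> n \<and> K - int i < b" 1]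
  by simp

lemma Bof_Xs:
  assumes "1 \<le> j" "j \<le> 2*n"
  shows "Bof n (Xs n j t) K = cB n j t K"
proof (cases "j \<le> n")
  case True
  then show ?thesis using assms
    by (simp add: Xs_def Xv_def Bof_add fs_Yv fs_minv Bof_minv Bof_Yv cB_def) auto
next
  case False
  define i where "i = 2*n - j + 1"
  have ii: "int i = 2 * int n - int j + 1" using assms unfolding i_def by simp
  have i1: "1 \<le> i" "i \<le> n" using assms False unfolding i_def by auto
  have "Bof n (Xs n j t) K = Bof n (Xbar n i t) K" using False by (simp add: Xs_def i_def)
  also have "\<dots> = cB n j t K"
    using False i1 ii assms
    by (simp add: Xbar_def Bof_add fs_Yv fs_minv Bof_minv Bof_Yv cB_def i_def) (auto simp: algebra_simps)
  finally show ?thesis .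
qed

lemma Aof_Xs:
  assumes "1 \<le> j" "j \<le> 2*n"
  shows "Aof n (Xs n j t) K = cA n j t K"
proof (cases "j \<le> n")
  case True
  then show ?thesis using assms
    by (simp add: Xs_def Xv_def Aof_add fs_Yv fs_minv Aof_minv Aof_Yv cA_def of_nat_diff) (auto simp: algebra_simps)
next
  case False
  define i where "i = 2*n - j + 1"
  have ii: "int i = 2 * int n - int j + 1" using assms unfolding i_def by simp
  have i1: "1 \<le> i" "i \<le> n" using assms False unfolding i_def by auto
  have "Aof n (Xs n j t) K = Aof n (Xbar n i t) K" using False by (simp add: Xs_def i_def)
  also have "\<dots> = cA n j t K"
    using False i1 ii assms
    by (simp add: Xbar_def Aof_add fs_Yv fs_minv Aof_minv Aof_Yv cA_def i_def of_nat_diff) (auto simp: algebra_simps)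
  finally show ?thesis .
qed



lemma Bof_Xword:
  assumes "set js \<subseteq> {1..2*n}"
  shows "Bof n (Xword n m js) K = (\<Sum>t<length js. cB n (js!t) (int (length js) + m - 1 - int t) K)"
proof -
  have "Bof n (Xword n m js) K = sum_list (map (\<lambda>t. Bof n (Xs n (js ! t) (int (length js) + m - 1 - int t)) K) [0..<length js])"
    unfolding Xword_def by (subst Bof_foldr) (auto simp: fs_Xs o_def)
  also have "\<dots> = (\<Sum>t<length js. Bof n (Xs n (js ! t) (int (length js) + m - 1 - int t)) K)"
    by (simp add: sum_set_upt_conv_sum_list_nat[symmetric] atLeast0LessThan)
  also have "\<dots> = (\<Sum>t<length js. cB n (js!t) (int (length js) + m - 1 - int t) K)"
  proof (rule sum.cong)
    fix t assume "t \<in> {..<length js}"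
    then have "js ! t \<in> {1..2*n}" using assms nth_mem by blast
    then show "Bof n (Xs n (js ! t) (int (length js) + m - 1 - int t)) K = cB n (js!t) (int (length js) + m - 1 - int t) K"
      by (simp add: Bof_Xs)
  qed simp
  finally show ?thesis .
qed

lemma Aof_Xword:
  assumes "set js \<subseteq> {1..2*n}"
  shows "Aof n (Xword n m js) K = (\<Sum>t<length js. cA n (js!t) (int (length js) + m - 1 - int t) K)"
proof -
  have "Aof n (Xword n m js) K = sum_list (map (\<lambda>t. Aof n (Xs n (js ! t) (int (length js) + m - 1 - int t)) K) [0..<length js])"
    unfolding Xword_def by (subst Aof_foldr) (auto simp: fs_Xs o_def)
  also have "\<dots> = (\<Sum>t<length js. Aof n (Xs n (js ! t) (int (length js) + m - 1 - int t)) K)"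
    by (simp add: sum_set_upt_conv_sum_list_nat[symmetric] atLeast0LessThan)
  also have "\<dots> = (\<Sum>t<length js. cA n (js!t) (int (length js) + m - 1 - int t) K)"
  proof (rule sum.cong)
    fix t assume "t \<in> {..<length js}"
    then have "js ! t \<in> {1..2*n}" using assms nth_mem by blast
    then show "Aof n (Xs n (js ! t) (int (length js) + m - 1 - int t)) K = cA n (js!t) (int (length js) + m - 1 - int t) K"
      by (simp add: Aof_Xs)
  qed simp
  finally show ?thesis .
qed

lemma ts_nonneg:
  assumes "fs M" "eps M i = 0"
  shows "tailsum M i k \<ge> 0"
proof -
  let ?S = "{j. M i j \<noteq> 0}"
  have fin: "finite ?S" using assms(1) unfolding fs_def by blast
  have bd: "\<And>k'. - tailsum M i k' \<le> (\<Sum>j\<in>?S. \<bar>M i j\<bar>)"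
  proof -
    fix k'
    have "- tailsum M i k' \<le> \<bar>tailsum M i k'\<bar>" by simp
    also have "\<dots> \<le> (\<Sum>j\<in>{j. k' < j \<and> M i j \<noteq> 0}. \<bar>M i j\<bar>)" unfolding tailsum_def by (rule sum_abs)
    also have "\<dots> \<le> (\<Sum>j\<in>?S. \<bar>M i j\<bar>)" by (rule sum_mono2) (use fin in auto)
    finally show "- tailsum M i k' \<le> (\<Sum>j\<in>?S. \<bar>M i j\<bar>)" .
  qed
  have "bdd_above (range (\<lambda>k. - tailsum M i k))"
    using bd by (intro bdd_aboveI[of _ "(\<Sum>j\<in>?S. \<bar>M i j\<bar>)"]) auto
  then have "- tailsum M i k \<le> Sup (range (\<lambda>k. - tailsum M i k))"
    by (rule cSup_upper[rotated]) simp
  then show ?thesis using assms(2) unfolding eps_def by simp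
qed

lemma hw_AB:
  assumes "highest_weight n M" "fs M"
  shows "Bof n M K \<ge> 0" "Aof n M K \<ge> 0"
  using assms ts_nonneg unfolding highest_weight_def Bof_def Aof_def
  by (auto intro!: sum_nonneg)

lemma sorted_gap:
  assumes "sorted_wrt (<) xs" "i \<le> j" "j < length xs"
  shows "xs!i + (j - i) \<le> xs!j"
  using assms(2,3)
proof (induction j rule: dec_induct)
  case base then show ?case by simp
next
  case (step k)
  have "xs!k < xs!(Suc k)" using assms(1) step by (simp add: sorted_wrt_nth_less)
  then show ?case using step by auto
qed

lemma sum_le_sub:
  fixes f :: "nat \<Rightarrow> int"
  assumes "finite A" "B \<subseteq> A" "\<forall>x\<in>A-B. f x \<le> 0"
  shows "sum f A \<le> sum f B"
proof -
  have "sum f A = sum f (A - B) + sum f B" using assms by (simp add: sum.subset_diff)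
  moreover have "sum f (A - B) \<le> 0" using assms(3) by (intro sum_nonpos) blast
  ultimately show ?thesis by simp
qed

lemma cB_le: "j \<noteq> 1 \<Longrightarrow> cB n j t K \<le> 0"
  unfolding cB_def by auto
lemma cB_le1: "cB n j t K \<le> 1"
  unfolding cB_def by auto
lemma cA_le: "j \<noteq> 1 \<Longrightarrow> cA n j t K \<le> 0"
  unfolding cA_def by auto



declare upt_Suc[simp del]

lemma sum_one:
  fixes f :: "nat \<Rightarrow> int"
  assumes "finite A" "B \<subseteq> A" "\<forall>x\<in>A-B. f x \<le> 0" "sum f B \<le> c"
  shows "sum f A \<le> c"
  using sum_le_sub[OF assms(1-3)] assms(4) by simp

lemma M1c1:
  assumes "n \<ge> 2" "1 \<le> p" "p \<le> 2*n-1"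
  shows "Bof n (Xword n m ([2..<p+1] @ [2*n])) (m + int n - 1) \<le> -1"
proof -
  let ?js = "[2..<p+1] @ [2*n]"
  have len: "length ?js = p" using assms by simp
  have nth: "\<And>t. t < p \<Longrightarrow> ?js ! t = (if t < p - 1 then t + 2 else 2*n)"
    using assms by (auto simp: nth_append)
  have set: "set ?js \<subseteq> {1..2*n}" using assms by auto
  let ?f = "\<lambda>t. cB n (?js!t) (int (length ?js) + m - 1 - int t) (m + int n - 1)"
  have "sum ?f {..<p} \<le> -1"
  proof (rule sum_one[where B="{p-1}"])
    show "\<forall>x\<in>{..<p} - {p-1}. ?f x \<le> 0"
    proof
      fix x assume "x \<in> {..<p} - {p-1}"
      then have "x < p - 1" by auto
      then show "?f x \<le> 0" using nth[of x] by (intro cB_le) simp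
    qed
    show "sum ?f {p-1} \<le> -1" using nth[of "p-1"] assms len by (simp add: cB_def)
  qed (use assms in auto)
  then show ?thesis unfolding Bof_Xword[OF set] len .
qed

lemma M1c3:
  assumes "n \<ge> 2" "1 \<le> p" "p \<le> 2*n-1"
  shows "Bof n (Xword n m ([1..<p] @ [2*n])) (m + int n - 1) \<le> -1"
proof -
  let ?js = "[1..<p] @ [2*n]"
  have len: "length ?js = p" using assms by simp
  have nth: "\<And>t. t < p \<Longrightarrow> ?js ! t = (if t < p - 1 then t + 1 else 2*n)"
    using assms by (auto simp: nth_append)
  have set: "set ?js \<subseteq> {1..2*n}" using assms by auto
  let ?f = "\<lambda>t. cB n (?js!t) (int (length ?js) + m - 1 - int t) (m + int n - 1)"
  have "sum ?f {..<p} \<le> -1"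
  proof (cases "p \<le> n")
    case True
    show ?thesis
    proof (rule sum_one[where B="{p-1}"])
      show "\<forall>x\<in>{..<p} - {p-1}. ?f x \<le> 0"
      proof
        fix x assume "x \<in> {..<p} - {p-1}"
        then have "x < p - 1" by auto
        then show "?f x \<le> 0" using nth[of x] True len by (auto simp: cB_def)
      qed
      show "sum ?f {p-1} \<le> -1" using nth[of "p-1"] assms len by (simp add: cB_def)
    qed (use assms in auto)
  next
    case False
    show ?thesis
    proof (rule sum_one[where B="{0, p-n, p-1}"])
      show "\<forall>x\<in>{..<p} - {0, p-n, p-1}. ?f x \<le> 0"
      proof
        fix x assume "x \<in> {..<p} - {0, p-n, p-1}"
        then have "x < p - 1" "x \<noteq> 0" by auto
        then show "?f x \<le> 0" using nth[of x] by (intro cB_le) simp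
      qed
      have d: "p - n \<noteq> 0" "p - n \<noteq> p - 1" "p - 1 \<noteq> 0" "p - n < p - 1" using False assms by auto
      have f0: "?f 0 = 1" using nth[of 0] False assms len by (simp add: cB_def)
      have f1: "?f (p-n) = -1" using nth[of "p-n"] False assms len d by (simp add: cB_def of_nat_diff)
      have f2: "?f (p-1) = -1" using nth[of "p-1"] False assms len by (simp add: cB_def)
      show "sum ?f {0, p-n, p-1} \<le> -1" using d f0 f1 f2 by simp
    qed (use assms in auto)
  qed
  then show ?thesis unfolding Bof_Xword[OF set] len .
qed

lemma M1c2big:
  assumes "n \<ge> 2" "n \<le> p" "p \<le> 2*n-1"
  shows "Bof n (Xword n m [2..<p+2]) (m + int n - 1) \<le> -1"
proof -
  let ?js = "[2..<p+2]"
  have len: "length ?js = p" using assms by simp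
  have nth: "\<And>t. t < p \<Longrightarrow> ?js ! t = t + 2" by simp
  have set: "set ?js \<subseteq> {1..2*n}" using assms by auto
  let ?f = "\<lambda>t. cB n (?js!t) (int (length ?js) + m - 1 - int t) (m + int n - 1)"
  have oth: "\<forall>x\<in>{..<p} - B. ?f x \<le> 0" for B
  proof
    fix x assume "x \<in> {..<p} - B"
    then show "?f x \<le> 0" using nth[of x] by (intro cB_le) simp
  qed
  have "sum ?f {..<p} \<le> -1"
  proof (cases "p = 2*n-1")
    case True
    show ?thesis
      by (rule sum_one[where B="{p-1}", OF _ _ oth]) (use assms True len in \<open>auto simp: cB_def\<close>)
  next
    case False
    show ?thesis
      by (rule sum_one[where B="{p-n}", OF _ _ oth]) (use assms False len in \<open>auto simp: cB_def of_nat_diff\<close>)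
  qed
  then show ?thesis unfolding Bof_Xword[OF set] len .
qed

lemma M1c2small_B:
  assumes "n \<ge> 2" "1 \<le> p" "p < n"
  shows "Bof n (Xword n m [2..<p+2]) (int p + m - 1) \<le> -1"
proof -
  let ?js = "[2..<p+2]"
  have len: "length ?js = p" using assms by simp
  have nth: "\<And>t. t < p \<Longrightarrow> ?js ! t = t + 2" by simp
  have set: "set ?js \<subseteq> {1..2*n}" using assms by auto
  let ?f = "\<lambda>t. cB n (?js!t) (int (length ?js) + m - 1 - int t) (int p + m - 1)"
  have oth: "\<forall>x\<in>{..<p} - B. ?f x \<le> 0" for B
  proof
    fix x assume "x \<in> {..<p} - B"
    then show "?f x \<le> 0" using nth[of x] by (intro cB_le) simp
  qed
  have "sum ?f {..<p} \<le> -1"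
    by (rule sum_one[where B="{0}", OF _ _ oth]) (use assms len in \<open>auto simp: cB_def\<close>)
  then show ?thesis unfolding Bof_Xword[OF set] len .
qed

lemma M1c2small_A:
  assumes "n \<ge> 2" "1 \<le> p" "p < n"
  shows "Aof n (Xword n m [2..<p+2]) K \<le> 0"
proof -
  let ?js = "[2..<p+2]"
  have set: "set ?js \<subseteq> {1..2*n}" using assms by auto
  have "(\<Sum>t<length ?js. cA n (?js!t) (int (length ?js) + m - 1 - int t) K) \<le> 0"
    by (rule sum_nonpos) (use assms in \<open>auto simp: cA_def\<close>)
  then show ?thesis using Aof_Xword[OF set] by simp
qed



lemma nth_range:
  fixes js :: "nat list" and n :: nat
  assumes "set js \<subseteq> {1..2*n}" "t < length js"
  shows "1 \<le> js!t" "js!t \<le> 2*n"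
proof -
  have "js!t \<in> set js" using assms(2) by (rule nth_mem)
  then have "js!t \<in> {1..2*n}" using assms(1) by blast
  then show "1 \<le> js!t" "js!t \<le> 2*n" by auto
qed

lemma one_only0:
  fixes js :: "nat list" and n :: nat
  assumes "sorted_wrt (<) js" "set js \<subseteq> {1..2*n}" "t < length js" "js ! t = 1"
  shows "t = 0"
proof -
  have "js!0 + (t - 0) \<le> js!t" using sorted_gap[OF assms(1), of 0 t] assms(3) by simp
  moreover have "js!0 \<ge> 1" using nth_range(1)[OF assms(2) order.strict_trans1[OF le0 assms(3)]] by simp
  ultimately show ?thesis using assms(4) by simp
qed

lemma M2_B_nonpos:
  fixes js :: "nat list" and n :: nat
  assumes "sorted_wrt (<) js" "set js \<subseteq> {1..2*n}" "js \<noteq> [] \<Longrightarrow> js!0 = 1 \<Longrightarrow> int (length js) \<le> K"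
  shows "Bof n (Xword n 1 js) K \<le> 0"
proof -
  have "(\<Sum>t<length js. cB n (js!t) (int (length js) + 1 - 1 - int t) K) \<le> 0"
  proof (rule sum_nonpos)
    fix t assume t: "t \<in> {..<length js}"
    show "cB n (js!t) (int (length js) + 1 - 1 - int t) K \<le> 0"
    proof (cases "js!t = 1")
      case True
      then have "t = 0" using one_only0[OF assms(1,2)] t by auto
      then show ?thesis using True assms(3) t by (auto simp: cB_def)
    qed (rule cB_le)
  qed
  then show ?thesis unfolding Bof_Xword[OF assms(2)] .
qed

lemma M2_B_r:
  fixes js :: "nat list" and n :: nat
  assumes "sorted_wrt (<) js" "set js \<subseteq> {1..2*n}" "1 \<le> r" "r < length js" "js!r \<le> n"
    "int (length js) - int r = K"
  shows "Bof n (Xword n 1 js) K \<le> 0"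
proof -
  let ?f = "\<lambda>t. cB n (js!t) (int (length js) + 1 - 1 - int t) K"
  have oth: "\<forall>x\<in>{..<length js} - {0, r}. ?f x \<le> 0"
  proof
    fix x assume x: "x \<in> {..<length js} - {0, r}"
    then have "js!x \<noteq> 1" using one_only0[OF assms(1,2)] by auto
    then show "?f x \<le> 0" by (rule cB_le)
  qed
  have "js!0 + (r - 0) \<le> js!r" using sorted_gap[OF assms(1), of 0 r] assms(4) by simp
  moreover have "js!0 \<ge> 1" using nth_range(1)[OF assms(2) order.strict_trans1[OF le0 assms(4)]] by simp
  ultimately have "js!r \<noteq> 1" "js!r \<ge> 2" using assms(3) by auto
  then have fr: "?f r = -1" using assms by (auto simp: cB_def)
  have "sum ?f {0, r} \<le> 0" using assms(3) fr cB_le1[of n "js!0"] by simp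
  then have "sum ?f {..<length js} \<le> 0"
    by (rule sum_one[OF _ _ oth, rotated 2]) (use assms in auto)
  then show ?thesis unfolding Bof_Xword[OF assms(2)] .
qed

lemma M2_A_r:
  fixes js :: "nat list" and n :: nat
  assumes "sorted_wrt (<) js" "set js \<subseteq> {1..2*n}" "r < length js" "js!r > n"
    "int (length js) - int r + int n = K" "int (length js) < K"
  shows "Aof n (Xword n 1 js) K \<le> -1"
proof -
  let ?f = "\<lambda>t. cA n (js!t) (int (length js) + 1 - 1 - int t) K"
  have oth: "\<forall>x\<in>{..<length js} - {r}. ?f x \<le> 0"
  proof
    fix x assume x: "x \<in> {..<length js} - {r}"
    show "?f x \<le> 0"
    proof (cases "js!x = 1")
      case True
      then have "x = 0" using one_only0[OF assms(1,2)] x by auto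
      then show ?thesis using True assms(6) by (auto simp: cA_def)
    qed (rule cA_le)
  qed
  have "js!r \<le> 2*n" using nth_range[OF assms(2,3)] by auto
  then have fr: "?f r = -1" using assms by (auto simp: cA_def)
  have "sum ?f {..<length js} \<le> -1"
    by (rule sum_one[OF _ _ oth]) (use assms fr in auto)
  then show ?thesis unfolding Aof_Xword[OF assms(2)] .
qed

lemma M2_B_main:
  fixes js :: "nat list" and n :: nat
  assumes "n \<ge> 2" "m \<ge> 1" "sorted_wrt (<) js" "set js \<subseteq> {1..2*n}"
  shows "Bof n (Xword n 1 js) (m + int n - 1) \<le> 0"
proof (cases "js \<noteq> [] \<and> js!0 = 1 \<and> int (length js) > m + int n - 1")
  case False
  then show ?thesis using M2_B_nonpos[OF assms(3,4)] by auto
next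
  case True
  let ?q = "length js"
  define r where "r = nat (int ?q - m - int n + 1)"
  have ri: "int r = int ?q - m - int n + 1" using True unfolding r_def by simp
  have r1: "1 \<le> r" "r < ?q" using ri assms True by auto
  show ?thesis
  proof (cases "js!r \<le> n")
    case True
    show ?thesis by (rule M2_B_r[OF assms(3,4) r1 True]) (use ri in simp)
  next
    case False
    have g: "js!r + (?q - 1 - r) \<le> js!(?q - 1)" using sorted_gap[OF assms(3), of r "?q - 1"] r1 by simp
    have last: "js!(?q - 1) \<le> 2*n" using nth_range[OF assms(4), of "?q - 1"] r1 by auto
    have qr: "int (?q - 1 - r) = m + int n - 2" using ri r1 by simp
    have "int (js!r) + int (?q - 1 - r) \<le> int (js!(?q - 1))" using g by linarith
    moreover have "int (js!(?q-1)) \<le> 2 * int n" using last by linarith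
    moreover have "int (js!r) \<ge> int n + 1" using False by linarith
    ultimately have m1: "m = 1" and "int (js!(?q-1)) = 2 * int n" using qr assms(2) by linarith+
    then have l2: "js!(?q-1) = 2*n" by linarith
    let ?f = "\<lambda>t. cB n (js!t) (int ?q + 1 - 1 - int t) (m + int n - 1)"
    have "int (?q - 1 - r) \<ge> 1" using qr assms by linarith
    then have d: "r \<noteq> 0" "?q - 1 \<noteq> 0" "?q - 1 \<noteq> r" using r1 by auto
    have oth: "\<forall>x\<in>{..<?q} - {0, r, ?q - 1}. ?f x \<le> 0"
    proof
      fix x assume x: "x \<in> {..<?q} - {0, r, ?q - 1}"
      then have "js!x \<noteq> 1" using one_only0[OF assms(3,4)] by auto
      then show "?f x \<le> 0" by (rule cB_le)
    qed
    have fr: "?f r \<le> 0" using False assms(1) by (intro cB_le) auto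
    have fl: "?f (?q - 1) = -1" using l2 m1 r1 assms by (auto simp: cB_def of_nat_diff)
    have "sum ?f {0, r, ?q - 1} \<le> 0" using d fr fl cB_le1[of n "js!0" "int ?q" "m + int n - 1"] by simp
    then have "sum ?f {..<?q} \<le> 0"
      by (rule sum_one[OF _ _ oth, rotated 2]) (use r1 in auto)
    then show ?thesis unfolding Bof_Xword[OF assms(4)] .
  qed
qed



theorem lemma5p8:
  fixes n p q :: nat and m :: int and M1 :: monomial
  assumes "n \<ge> 2"
    and "m \<ge> 1"
    and "p \<in> {1..2*n-1}" and "q \<in> {1..2*n-1}"
    and "m + max (int p - int n) 0 \<ge> 1 + max (int q - int n) 0"
    and "M1 \<in> Mset n p m"
    and "M1 = Xword n m ([2..<p+1] @ [2*n])
       \<or> M1 = Xword n m [2..<p+2]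
       \<or> M1 = Xword n m ([1..<p] @ [2*n])"
  shows "\<forall>M2 \<in> Mset n q 1. \<not> highest_weight n (mmult M1 M2)"
proof (intro ballI notI)
  fix M2 assume "M2 \<in> Mset n q 1"
  then obtain js where M2: "M2 = Xword n 1 js" and len: "length js = q"
    and srt: "sorted_wrt (<) js" and st: "set js \<subseteq> {1..2*n}"
    unfolding Mset_def by blast
  assume hw: "highest_weight n (mmult M1 M2)"
  have fs1: "fs M1" using assms(7) fs_Xword by blast
  have fs2: "fs M2" using M2 fs_Xword by blast
  have Bg: "Bof n M1 K + Bof n M2 K \<ge> 0" for K
    using hw_AB(1)[OF hw fs_mmult[OF fs1 fs2], of K] Bof_add[OF fs1 fs2] by simp
  have Ag: "Aof n M1 K + Aof n M2 K \<ge> 0" for K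
    using hw_AB(2)[OF hw fs_mmult[OF fs1 fs2], of K] Aof_add[OF fs1 fs2] by simp
  have p1: "1 \<le> p" "p \<le> 2*n-1" using assms(3) by auto
  have B2: "Bof n M2 (m + int n - 1) \<le> 0"
    unfolding M2 by (rule M2_B_main[OF assms(1,2) srt st])
  consider (c1) "M1 = Xword n m ([2..<p+1] @ [2*n])" | (c2) "M1 = Xword n m [2..<p+2]"
    | (c3) "M1 = Xword n m ([1..<p] @ [2*n])" using assms(7) by blast
  then show False
  proof cases
    case c1
    then show False using M1c1[OF assms(1) p1, where m=m] B2 Bg[of "m + int n - 1"] by simp
  next
    case c3
    then show False using M1c3[OF assms(1) p1, where m=m] B2 Bg[of "m + int n - 1"] by simp
  next
    case c2
    show False
    proof (cases "n \<le> p")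
      case True
      then show False using c2 M1c2big[OF assms(1) True p1(2), where m=m] B2 Bg[of "m + int n - 1"] by simp
    next
      case False
      then have pn: "p < n" by simp
      have qle: "int q \<le> m + int n - 1" using assms(5) pn by linarith
      have B1: "Bof n M1 (int p + m - 1) \<le> -1" using c2 M1c2small_B[OF assms(1) p1(1) pn, where m=m] by simp
      show False
      proof (cases "js \<noteq> [] \<and> js!0 = 1 \<and> int q > int p + m - 1")
        case False
        have "Bof n M2 (int p + m - 1) \<le> 0"
          unfolding M2 by (rule M2_B_nonpos[OF srt st]) (use False len in auto)
        then show False using B1 Bg[of "int p + m - 1"] by simp
      next
        case True
        define r where "r = nat (int q - int p - m + 1)"
        have ri: "int r = int q - int p - m + 1" using True unfolding r_def by simp
        have r1: "1 \<le> r" "r < length js" using ri assms(2) p1 True len by auto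
        show False
        proof (cases "js!r \<le> n")
          case True
          have "Bof n M2 (int p + m - 1) \<le> 0"
            unfolding M2 by (rule M2_B_r[OF srt st r1 True]) (use ri len in simp)
          then show False using B1 Bg[of "int p + m - 1"] by simp
        next
          case False
          have "Aof n M2 (int n + int p + m - 1) \<le> -1"
            unfolding M2 by (rule M2_A_r[OF srt st r1(2)]) (use ri len False qle p1 in auto)
          moreover have "Aof n M1 (int n + int p + m - 1) \<le> 0"
            using c2 M1c2small_A[OF assms(1) p1(1) pn, where m=m] by simp
          ultimately show False using Ag[of "int n + int p + m - 1"] by simp
        qed
      qed
    qed
  qed
qed


end
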